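(* For all $1\le a\le n$, $S_a\cdot L(u)=0$, i.e. every coefficient of the formal power series $L(u)$ in $D$ is annihilated by $S_a$.
   Context: Fix $n\ge4$. Let $Q_a(u)$ ($1\le a\le n$, $u\in\mathbb C$) be algebraically independent commuting indeterminates, $\mathcal Q=\mathbb Z[Q_a(u)^{\pm1}]$. Bilinear form of type $D_n$: $(\alpha_a|\alpha_a)=2$, $(\alpha_a|\alpha_{a+1})=(\alpha_{a+1}|\alpha_a)=-1$ for $1\le a\le n-2$, $(\alpha_{n-2}|\alpha_n)=(\alpha_n|\alpha_{n-2})=-1$, all other $(\alpha_a|\alpha_b)=0$ ($a\ne b$). Put $Y_a(u)=Q_a(u-1)/Q_a(u+1)$, $Y_0(u)=1$, $\mathcal Y=\mathbb Z[Y_a(u)^{\pm1}]$. Define $z_a(u)=\frac{Y_a(u+a)}{Y_{a-1}(u+a+1)}$, $z_{\bar a}(u)=\frac{Y_{a-1}(u+2n-a-1)}{Y_a(u+2n-a)}$ for $1\le a\le n-2$; $z_{n-1}(u)=\frac{Y_n(u+n-1)Y_{n-1}(u+n-1)}{Y_{n-2}(u+n)}$, $z_{\overline{n-1}}(u)=\frac{Y_{n-2}(u+n)}{Y_n(u+n+1)Y_{n-1}(u+n+1)}$, $z_n(u)=\frac{Y_n(u+n-1)}{Y_{n-1}(u+n+1)}$, $z_{\bar n}(u)=\frac{Y_{n-1}(u+n-1)}{Y_n(u+n+1)}$. In the ring of formal power series $\sum_{j\ge0}c_j(u)D^j$ ($c_j(u)\in\mathcal Y$, $D\,c(u)=c(u+1)D$)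 define \[ L(u)=(1-z_{\bar1}(u)D^2)\cdots(1-z_{\bar n}(u)D^2)\,(1-z_n(u)z_{\bar n}(u+2)D^4)^{-1}\,(1-z_n(u)D^2)\cdots(1-z_1(u)D^2), \] with $(1-cD^4)^{-1}=\sum_{k\ge0}(cD^4)^k$. Screening: let $A_a(u)=\prod_{b=1}^n\frac{Q_b(u-(\alpha_a|\alpha_b))}{Q_b(u+(\alpha_a|\alpha_b))}$; let $\mathcal S$ be the commutative ring generated over $\mathcal Q$ by symbols $S_a(u)$ subject to $S_a(u+2)=A_a(u+1)S_a(u)$. $S_a:\mathcal Y\to\mathcal S$ is the additive map obeying the Leibniz rule with $S_a\cdot Y_b(u)=\delta_{ab}Y_b(u)S_b(u)$; it acts on power series in $D$ coefficientwise. *)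

theory Defs
  imports Complex_Main "HOL-Library.Poly_Mapping"
begin

text \<open>Variables are pairs (a,u) with a a node index and u a complex spectral parameter.
  A Laurent polynomial ring Z[x_v^(+-1)] is the group ring of the free abelian group
  of exponent vectors (v =>0 int), i.e. the type below.\<close>

type_synonym var = "nat \<times> complex"
type_synonym lpoly = "(var \<Rightarrow>\<^sub>0 int) \<Rightarrow>\<^sub>0 int"

definition lmono :: "(var \<Rightarrow>\<^sub>0 int) \<Rightarrow> lpoly" where
  "lmono e = Poly_Mapping.single e 1"

text \<open>Y-ring: variables (a,u) stand for Y_a(u) (a = 1..n).  Y_0(u) = 1.\<close>

definition Yv :: "nat \<Rightarrow> complex \<Rightarrow> lpoly" where
  "Yv a u = (if a = 0 then 1 else lmono (Poly_Mapping.single (a,u) 1))"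

definition Yinv :: "nat \<Rightarrow> complex \<Rightarrow> lpoly" where
  "Yinv a u = (if a = 0 then 1 else lmono (Poly_Mapping.single (a,u) (-1)))"

text \<open>Q-ring: variables (a,u) stand for Q_a(u).  Embedding of the Y-ring into the Q-ring,
  Y_a(u) = Q_a(u-1)/Q_a(u+1).\<close>

definition embexp :: "(var \<Rightarrow>\<^sub>0 int) \<Rightarrow> (var \<Rightarrow>\<^sub>0 int)" where
  "embexp e = (\<Sum>(b,v)\<in>Poly_Mapping.keys e. Poly_Mapping.single (b, v - 1) (Poly_Mapping.lookup e (b,v))
                               - Poly_Mapping.single (b, v + 1) (Poly_Mapping.lookup e (b,v)))"

definition embY :: "lpoly \<Rightarrow> lpoly" where
  "embY \<chi> = (\<Sum>e\<in>Poly_Mapping.keys \<chi>. Poly_Mapping.single (embexp e) (Poly_Mapping.lookup \<chi> e))"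

definition cartanD :: "nat \<Rightarrow> nat \<Rightarrow> nat \<Rightarrow> int" where
  "cartanD n a b =
     (if a = b then 2
      else if (1 \<le> a \<and> a \<le> n - 2 \<and> b = a + 1) \<or> (1 \<le> b \<and> b \<le> n - 2 \<and> a = b + 1) then -1
      else if (a = n - 2 \<and> b = n) \<or> (a = n \<and> b = n - 2) then -1
      else 0)"

text \<open>A_a(u) = prod_b Q_b(u - (a|b)) / Q_b(u + (a|b)), as a monomial of the Q-ring.\<close>

definition Aexp :: "nat \<Rightarrow> nat \<Rightarrow> complex \<Rightarrow> (var \<Rightarrow>\<^sub>0 int)" where
  "Aexp n a u = (\<Sum>b\<in>{1..n}. Poly_Mapping.single (b, u - of_int (cartanD n a b)) 1
                              - Poly_Mapping.single (b, u + of_int (cartanD n a b)) 1)"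

text \<open>Polynomial ring over the Q-ring in the symbols S_a(u); S is its quotient by the
  ideal generated by S_a(u+2) - A_a(u+1) S_a(u).\<close>

type_synonym spoly = "(var \<Rightarrow>\<^sub>0 nat) \<Rightarrow>\<^sub>0 lpoly"

definition Sconst :: "lpoly \<Rightarrow> spoly" where
  "Sconst q = Poly_Mapping.single 0 q"

definition Svar :: "nat \<Rightarrow> complex \<Rightarrow> spoly" where
  "Svar a u = Poly_Mapping.single (Poly_Mapping.single (a,u) 1) 1"

inductive_set Srel_ideal :: "nat \<Rightarrow> spoly set" for n :: nat where
  zero: "0 \<in> Srel_ideal n"
| add: "x \<in> Srel_ideal n \<Longrightarrow> y \<in> Srel_ideal n \<Longrightarrow> x + y \<in> Srel_ideal n"
| gen: "1 \<le> a \<Longrightarrow> a \<le> n \<Longrightarrow>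
        r * (Svar a (u + 2) - Sconst (lmono (Aexp n a (u + 1))) * Svar a u) \<in> Srel_ideal n"

definition S_zero :: "nat \<Rightarrow> spoly \<Rightarrow> bool" where
  "S_zero n x \<longleftrightarrow> x \<in> Srel_ideal n"

text \<open>The unique additive map Y -> S with Leibniz rule and S_a Y_b(u) = delta_ab Y_b(u) S_b(u):
  on a Laurent monomial Y^e it gives sum_u e(a,u) Y^e S_a(u).\<close>

definition screen :: "nat \<Rightarrow> lpoly \<Rightarrow> spoly" where
  "screen a \<chi> = (\<Sum>e\<in>Poly_Mapping.keys \<chi>. of_int (Poly_Mapping.lookup \<chi> e) * Sconst (embY (lmono e)) *
        (\<Sum>(b,v)\<in>Poly_Mapping.keys e. if b = a then of_int (Poly_Mapping.lookup e (b,v)) * Svar a v else 0))"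

definition zz :: "nat \<Rightarrow> nat \<Rightarrow> complex \<Rightarrow> lpoly" where
  "zz n a u =
     (if a \<le> n - 2 then Yv a (u + of_nat a) * Yinv (a - 1) (u + of_nat a + 1)
      else if a = n - 1 then Yv n (u + of_nat n - 1) * Yv (n - 1) (u + of_nat n - 1)
                              * Yinv (n - 2) (u + of_nat n)
      else Yv n (u + of_nat n - 1) * Yinv (n - 1) (u + of_nat n + 1))"

definition zbar :: "nat \<Rightarrow> nat \<Rightarrow> complex \<Rightarrow> lpoly" where
  "zbar n a u =
     (if a \<le> n - 2 then Yv (a - 1) (u + 2 * of_nat n - of_nat a - 1)
                         * Yinv a (u + 2 * of_nat n - of_nat a)
      else if a = n - 1 then Yv (n - 2) (u + of_nat n)
                              * Yinv n (u + of_nat n + 1) * Yinv (n - 1) (u + of_nat n + 1)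
      else Yv (n - 1) (u + of_nat n - 1) * Yinv n (u + of_nat n + 1))"

text \<open>A series sum_j c_j(u) D^j is represented by c :: nat => complex => Y;
  D c(u) = c(u+1) D gives the product below.\<close>

type_synonym dser = "nat \<Rightarrow> complex \<Rightarrow> lpoly"

definition dmult :: "dser \<Rightarrow> dser \<Rightarrow> dser" where
  "dmult f g = (\<lambda>k u. \<Sum>i\<le>k. f i u * g (k - i) (u + of_nat i))"

definition dunit :: dser where
  "dunit = (\<lambda>k u. if k = 0 then 1 else 0)"

definition dmono :: "(complex \<Rightarrow> lpoly) \<Rightarrow> nat \<Rightarrow> dser" where
  "dmono c d = (\<lambda>k u. if k = d then c u else 0)"

primrec dpow :: "dser \<Rightarrow> nat \<Rightarrow> dser" where
  "dpow f 0 = dunit"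
| "dpow f (Suc m) = dmult f (dpow f m)"

definition dfac :: "(complex \<Rightarrow> lpoly) \<Rightarrow> dser" where
  "dfac c = (\<lambda>k u. dunit k u - dmono c 2 k u)"

text \<open>(1 - c D^4)^(-1) = sum_k (c D^4)^k; the coefficient of D^j only receives
  contributions from k \<le> j.\<close>
definition dgeom4 :: "(complex \<Rightarrow> lpoly) \<Rightarrow> dser" where
  "dgeom4 c = (\<lambda>j u. \<Sum>k\<le>j. dpow (dmono c 4) k j u)"

definition Lser :: "nat \<Rightarrow> dser" where
  "Lser n = foldr dmult
     (map (\<lambda>a. dfac (zbar n a)) [1..<n+1]
      @ [dgeom4 (\<lambda>u. zz n n u * zbar n n (u + 2))]
      @ map (\<lambda>a. dfac (zz n a)) (rev [1..<n+1]))
     dunit"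

end

theory Submission
  imports Defs
begin


lemma lmono_mult: "lmono e * lmono f = lmono (e + f)"
  by (simp add: lmono_def mult_single)

lemma lmono_zero: "lmono 0 = 1"
  by (simp add: lmono_def)

lemma sum_keys_superset:
  fixes g :: "'k \<Rightarrow> 'v::zero \<Rightarrow> 'r::comm_monoid_add"
  assumes "finite F" "Poly_Mapping.keys e \<subseteq> F" "\<And>k. g k 0 = 0"
  shows "(\<Sum>k\<in>Poly_Mapping.keys e. g k (Poly_Mapping.lookup e k)) = (\<Sum>k\<in>F. g k (Poly_Mapping.lookup e k))"
  by (rule sum.mono_neutral_left) (use assms in \<open>auto simp: in_keys_iff\<close>)

lemma sum_keys_add:
  fixes g :: "'k \<Rightarrow> 'v::monoid_add \<Rightarrow> 'r::comm_monoid_add"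
  assumes "\<And>k. g k 0 = 0" "\<And>k x y. g k (x + y) = g k x + g k y"
  shows "(\<Sum>k\<in>Poly_Mapping.keys (e1 + e2). g k (Poly_Mapping.lookup (e1 + e2) k)) =
     (\<Sum>k\<in>Poly_Mapping.keys e1. g k (Poly_Mapping.lookup e1 k)) + (\<Sum>k\<in>Poly_Mapping.keys e2. g k (Poly_Mapping.lookup e2 k))"
proof -
  let ?F = "Poly_Mapping.keys e1 \<union> Poly_Mapping.keys e2"
  have f: "finite ?F" by simp
  have "(\<Sum>k\<in>Poly_Mapping.keys (e1 + e2). g k (Poly_Mapping.lookup (e1 + e2) k)) = (\<Sum>k\<in>?F. g k (Poly_Mapping.lookup (e1 + e2) k))"
    by (rule sum_keys_superset) (use assms keys_add[of e1 e2] in auto)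
  also have "\<dots> = (\<Sum>k\<in>?F. g k (Poly_Mapping.lookup e1 k)) + (\<Sum>k\<in>?F. g k (Poly_Mapping.lookup e2 k))"
    by (simp add: lookup_add assms sum.distrib)
  also have "\<dots> = (\<Sum>k\<in>Poly_Mapping.keys e1. g k (Poly_Mapping.lookup e1 k)) + (\<Sum>k\<in>Poly_Mapping.keys e2. g k (Poly_Mapping.lookup e2 k))"
    using sum_keys_superset[of ?F e1 g] sum_keys_superset[of ?F e2 g] assms by auto
  finally show ?thesis .
qed

lemma sum_keys_single:
  fixes g :: "'k \<Rightarrow> 'v::zero \<Rightarrow> 'r::comm_monoid_add"
  assumes "\<And>k. g k 0 = 0"
  shows "(\<Sum>k\<in>Poly_Mapping.keys (Poly_Mapping.single p c). g k (Poly_Mapping.lookup (Poly_Mapping.single p c) k)) = g p c"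
  using assms by (cases "c = 0") auto

definition sv :: "nat \<Rightarrow> (var \<Rightarrow>\<^sub>0 int) \<Rightarrow> spoly" where
  "sv a e = (\<Sum>(b,v)\<in>Poly_Mapping.keys e. if b = a then of_int (Poly_Mapping.lookup e (b,v)) * Svar a v else 0)"

lemma sv_alt: "sv a e = (\<Sum>k\<in>Poly_Mapping.keys e. (\<lambda>k c. if fst k = a then of_int c * Svar a (snd k) else 0) k (Poly_Mapping.lookup e k))"
  unfolding sv_def by (rule sum.cong) auto

lemma sv_add: "sv a (e1 + e2) = sv a e1 + sv a e2"
  unfolding sv_alt by (rule sum_keys_add) (auto simp: distrib_right)

lemma sv_zero[simp]: "sv a 0 = 0"
  by (simp add: sv_def)

lemma sv_uminus: "sv a (- e) = - sv a e"
  using sv_add[of a e "-e"] by (simp add: eq_neg_iff_add_eq_0 add.commute)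

lemma sv_diff: "sv a (e1 - e2) = sv a e1 - sv a e2"
  using sv_add[of a e1 "-e2"] sv_uminus[of a e2] by simp

lemma sv_single: "sv a (Poly_Mapping.single (b,v) c) = (if b = a then of_int c * Svar a v else 0)"
  unfolding sv_alt by (subst sum_keys_single) auto

lemma embexp_alt: "embexp e = (\<Sum>k\<in>Poly_Mapping.keys e. (\<lambda>k c. Poly_Mapping.single (fst k, snd k - 1) c - Poly_Mapping.single (fst k, snd k + 1) c) k (Poly_Mapping.lookup e k))"
  unfolding embexp_def by (rule sum.cong) auto

lemma embexp_add: "embexp (e1 + e2) = embexp e1 + embexp e2"
  unfolding embexp_alt by (rule sum_keys_add) (auto simp: single_add)

lemma embexp_zero[simp]: "embexp 0 = 0"
  by (simp add: embexp_def)

lemma embexp_uminus: "embexp (- e) = - embexp e"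
  using embexp_add[of e "-e"] by (simp add: eq_neg_iff_add_eq_0 add.commute)

lemma embexp_diff: "embexp (e1 - e2) = embexp e1 - embexp e2"
  using embexp_add[of e1 "-e2"] embexp_uminus[of e2] by simp

lemma embexp_single: "embexp (Poly_Mapping.single (b,v) c) = Poly_Mapping.single (b, v - 1) c - Poly_Mapping.single (b, v + 1) c"
  unfolding embexp_alt by (subst sum_keys_single) auto

lemma embY_alt: "embY x = (\<Sum>k\<in>Poly_Mapping.keys x. (\<lambda>k c. Poly_Mapping.single (embexp k) c) k (Poly_Mapping.lookup x k))"
  unfolding embY_def by simp

lemma embY_add: "embY (x + y) = embY x + embY y"
  unfolding embY_alt by (rule sum_keys_add) (auto simp: single_add)

lemma embY_zero[simp]: "embY 0 = 0"
  by (simp add: embY_def)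

lemma embY_uminus: "embY (- e) = - embY e"
  using embY_add[of e "-e"] by (simp add: eq_neg_iff_add_eq_0 add.commute)

lemma embY_diff: "embY (e1 - e2) = embY e1 - embY e2"
  using embY_add[of e1 "-e2"] embY_uminus[of e2] by simp

lemma embY_lmono: "embY (lmono e) = lmono (embexp e)"
  unfolding embY_alt lmono_def by (subst sum_keys_single) auto

lemma frag_of_lmono: "frag_of e = lmono e"
  by (simp add: lmono_def)

lemma embY_mult: "embY (x * y) = embY x * embY y"
proof -
  have "\<forall>y. embY (x * y) = embY x * embY y"
  using subset_UNIV proof (induction x rule: frag_induction)
    case zero then show ?case by simp
  next
    case (one e)
    show ?case
    proof
      fix y :: lpoly
      show "embY (frag_of e * y) = embY (frag_of e) * embY y"
      using subset_UNIV proof (induction y rule: frag_induction)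
        case (one f) then show ?case
          by (simp add: frag_of_lmono lmono_mult embY_lmono embexp_add)
      qed (auto simp: embY_diff right_diff_distrib)
    qed
  qed (auto simp: embY_diff left_diff_distrib)
  then show ?thesis by blast
qed

lemma embY_one[simp]: "embY 1 = 1"
  using embY_lmono[of 0] by (simp add: lmono_zero)

lemma Sconst_add: "Sconst (x + y) = Sconst x + Sconst y"
  by (simp add: Sconst_def single_add)
lemma Sconst_diff: "Sconst (x - y) = Sconst x - Sconst y"
  by (simp add: Sconst_def single_diff)
lemma Sconst_mult: "Sconst (x * y) = Sconst x * Sconst y"
  by (simp add: Sconst_def mult_single)
lemma Sconst_one[simp]: "Sconst 1 = 1"
  by (simp add: Sconst_def)
lemma Sconst_zero[simp]: "Sconst 0 = 0"
  by (simp add: Sconst_def)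

definition iota :: "lpoly \<Rightarrow> spoly" where "iota x = Sconst (embY x)"

lemma iota_add: "iota (x + y) = iota x + iota y"
  by (simp add: iota_def embY_add Sconst_add)
lemma iota_diff: "iota (x - y) = iota x - iota y"
  by (simp add: iota_def embY_diff Sconst_diff)
lemma iota_mult: "iota (x * y) = iota x * iota y"
  by (simp add: iota_def embY_mult Sconst_mult)
lemma iota_one[simp]: "iota 1 = 1"
  by (simp add: iota_def)
lemma iota_zero[simp]: "iota 0 = 0"
  by (simp add: iota_def)
lemma iota_lmono: "iota (lmono e) = Sconst (lmono (embexp e))"
  by (simp add: iota_def embY_lmono)

lemma screen_alt: "screen a x = (\<Sum>k\<in>Poly_Mapping.keys x. (\<lambda>k c. of_int c * iota (lmono k) * sv a k) k (Poly_Mapping.lookup x k))"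
  unfolding screen_def sv_def iota_def by simp

lemma screen_add: "screen a (x + y) = screen a x + screen a y"
  unfolding screen_alt by (rule sum_keys_add) (auto simp: distrib_right)

lemma screen_zero[simp]: "screen a 0 = 0"
  by (simp add: screen_def)

lemma screen_uminus: "screen a (- e) = - screen a e"
  using screen_add[of a e "-e"] by (simp add: eq_neg_iff_add_eq_0 add.commute)

lemma screen_diff: "screen a (e1 - e2) = screen a e1 - screen a e2"
  using screen_add[of a e1 "-e2"] screen_uminus[of a e2] by simp

lemma screen_lmono: "screen a (lmono e) = iota (lmono e) * sv a e"
  unfolding screen_alt lmono_def by (subst sum_keys_single) auto

lemma screen_mult: "screen a (x * y) = screen a x * iota y + iota x * screen a y"
proof -
  have "\<forall>y. screen a (x * y) = screen a x * iota y + iota x * screen a y"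
  using subset_UNIV proof (induction x rule: frag_induction)
    case zero then show ?case by simp
  next
    case (one e)
    show ?case
    proof
      fix y :: lpoly
      show "screen a (frag_of e * y) = screen a (frag_of e) * iota y + iota (frag_of e) * screen a y"
      using subset_UNIV proof (induction y rule: frag_induction)
        case (one f)
        have "iota (lmono (e+f)) = iota (lmono e) * iota (lmono f)"
          by (simp add: lmono_mult[symmetric] iota_mult)
        then show ?case
          by (simp add: frag_of_lmono lmono_mult screen_lmono sv_add algebra_simps)
      next
        case (diff x y) then show ?case
          by (simp add: screen_diff iota_diff algebra_simps)
      qed auto
    qed
  next
    case (diff x y) then show ?case
      by (simp add: screen_diff iota_diff algebra_simps)
  qed
  then show ?thesis by blast
qed

lemma screen_one[simp]: "screen a 1 = 0"
  using screen_lmono[of a 0] by (simp add: lmono_zero)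



lemma ideal_mult: "x \<in> Srel_ideal n \<Longrightarrow> r * x \<in> Srel_ideal n"
proof (induction x arbitrary: r rule: Srel_ideal.induct)
  case zero then show ?case by (simp add: Srel_ideal.zero)
next
  case (add x y) then show ?case by (simp add: distrib_left Srel_ideal.add)
next
  case (gen a r' u) then show ?case
    using Srel_ideal.gen[of a n "r * r'" u] by (simp add: mult.assoc)
qed

lemma ideal_uminus: "x \<in> Srel_ideal n \<Longrightarrow> - x \<in> Srel_ideal n"
  using ideal_mult[of x n "-1"] by simp

lemma ideal_diff: "x \<in> Srel_ideal n \<Longrightarrow> y \<in> Srel_ideal n \<Longrightarrow> x - y \<in> Srel_ideal n"
  using Srel_ideal.add[OF _ ideal_uminus] by (metis diff_conv_add_uminus)

definition KK :: "nat \<Rightarrow> nat \<Rightarrow> lpoly set" where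
  "KK n a = {x. screen a x \<in> Srel_ideal n}"

lemma KK_add: "x \<in> KK n a \<Longrightarrow> y \<in> KK n a \<Longrightarrow> x + y \<in> KK n a"
  by (simp add: KK_def screen_add Srel_ideal.add)
lemma KK_diff: "x \<in> KK n a \<Longrightarrow> y \<in> KK n a \<Longrightarrow> x - y \<in> KK n a"
  by (simp add: KK_def screen_diff ideal_diff)
lemma KK_uminus: "x \<in> KK n a \<Longrightarrow> - x \<in> KK n a"
  by (simp add: KK_def screen_uminus ideal_uminus)
lemma KK_mult: "x \<in> KK n a \<Longrightarrow> y \<in> KK n a \<Longrightarrow> x * y \<in> KK n a"
  by (simp add: KK_def screen_mult Srel_ideal.add ideal_mult mult.commute[of _ "iota _"])
lemma KK_zero[simp]: "0 \<in> KK n a"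
  by (simp add: KK_def Srel_ideal.zero)
lemma KK_one[simp]: "1 \<in> KK n a"
  by (simp add: KK_def Srel_ideal.zero)
lemma KK_sum: "(\<And>i. i \<in> A \<Longrightarrow> f i \<in> KK n a) \<Longrightarrow> sum f A \<in> KK n a"
  by (induction A rule: infinite_finite_induct) (auto intro: KK_add)
lemma KK_prod: "(\<And>i. i \<in> A \<Longrightarrow> f i \<in> KK n a) \<Longrightarrow> prod f A \<in> KK n a"
  by (induction A rule: infinite_finite_induct) (auto intro: KK_mult)

lemma KK_lmono0: "sv a e = 0 \<Longrightarrow> lmono e \<in> KK n a"
  by (simp add: KK_def screen_lmono Srel_ideal.zero)

lemma pair_rel:
  assumes "1 \<le> a" "a \<le> n" "sv a e1 = Svar a w" "sv a e2 = - Svar a (w + 2)"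
    "embexp e1 = embexp e2 + Aexp n a (w + 1)"
  shows "lmono e1 + lmono e2 \<in> KK n a"
proof -
  have "screen a (lmono e1 + lmono e2) = - iota (lmono e2) * (Svar a (w + 2) - Sconst (lmono (Aexp n a (w + 1))) * Svar a w)"
  proof -
    have i1: "iota (lmono e1) = iota (lmono e2) * Sconst (lmono (Aexp n a (w + 1)))"
      unfolding iota_lmono assms(5) by (simp add: lmono_mult[symmetric] Sconst_mult)
    show ?thesis
      unfolding screen_add screen_lmono i1 assms(3,4) by (simp add: algebra_simps)
  qed
  moreover have "\<dots> \<in> Srel_ideal n"
    by (rule Srel_ideal.gen) (use assms in auto)
  ultimately show ?thesis by (simp add: KK_def)
qed



lemma assoc_lemma:
  fixes f :: "nat \<Rightarrow> nat \<Rightarrow> nat \<Rightarrow> 'a::comm_monoid_add"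
  shows "(\<Sum>j\<le>k. \<Sum>i\<le>j. f i (j - i) (n - j)) = (\<Sum>j\<le>k. \<Sum>i\<le>k - j. f j i (n - j - i))"
  by (induct k) (simp_all add: Suc_diff_le sum.distrib add.assoc)

lemma dmult_assoc: "dmult (dmult f g) h = dmult f (dmult g h)"
proof (intro ext)
  fix k u
  define F where "F j l m = f j u * g l (u + of_nat j) * h m (u + of_nat j + of_nat l)" for j l m
  have "dmult (dmult f g) h k u = (\<Sum>i\<le>k. \<Sum>j\<le>i. F j (i - j) (k - i))"
    unfolding dmult_def F_def sum_distrib_right
    by (intro sum.cong refl) (simp add: of_nat_diff)
  also have "\<dots> = (\<Sum>j\<le>k. \<Sum>l\<le>k - j. F j l (k - j - l))"
    by (rule assoc_lemma)
  also have "\<dots> = dmult f (dmult g h) k u"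
    unfolding dmult_def F_def sum_distrib_left
    by (intro sum.cong refl) (simp add: mult.assoc add.assoc)
  finally show "dmult (dmult f g) h k u = dmult f (dmult g h) k u" .
qed

lemma dmult_dunit_left: "dmult dunit f = f"
proof (intro ext)
  fix k u
  have "dmult dunit f k u = (\<Sum>i\<le>k. if i = 0 then f k u else 0)"
    unfolding dmult_def dunit_def by (intro sum.cong refl) auto
  then show "dmult dunit f k u = f k u" by simp
qed

lemma dmult_dunit_right: "dmult f dunit = f"
proof (intro ext)
  fix k u
  have "dmult f dunit k u = (\<Sum>i\<le>k. if i = k then f i u else 0)"
    unfolding dmult_def dunit_def by (intro sum.cong refl) auto
  then show "dmult f dunit k u = f k u" by simp
qed

typedef ds = "UNIV :: dser set" by simp

lemmas Rep_ds_inv = Abs_ds_inverse[OF UNIV_I]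

instantiation ds :: ring_1
begin
definition "0 = Abs_ds (\<lambda>k u. 0)"
definition "1 = Abs_ds dunit"
definition "x + y = Abs_ds (\<lambda>k u. Rep_ds x k u + Rep_ds y k u)"
definition "x - y = Abs_ds (\<lambda>k u. Rep_ds x k u - Rep_ds y k u)"
definition "- x = Abs_ds (\<lambda>k u. - Rep_ds x k u)"
definition "x * y = Abs_ds (dmult (Rep_ds x) (Rep_ds y))"
instance
proof
  fix a b c :: ds
  show "a + b + c = a + (b + c)"
    by (simp add: plus_ds_def Rep_ds_inv add.assoc)
  show "a + b = b + a"
    by (simp add: plus_ds_def Rep_ds_inv add.commute)
  show "0 + a = a"
    by (simp add: plus_ds_def zero_ds_def Rep_ds_inv Rep_ds_inverse)
  show "- a + a = 0"
    by (simp add: plus_ds_def zero_ds_def uminus_ds_def Rep_ds_inv)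
  show "a - b = a + - b"
    by (simp add: plus_ds_def minus_ds_def uminus_ds_def Rep_ds_inv)
  show "a * b * c = a * (b * c)"
    by (simp add: times_ds_def Rep_ds_inv dmult_assoc)
  show "1 * a = a"
    by (simp add: times_ds_def one_ds_def Rep_ds_inv dmult_dunit_left Rep_ds_inverse)
  show "a * 1 = a"
    by (simp add: times_ds_def one_ds_def Rep_ds_inv dmult_dunit_right Rep_ds_inverse)
  show "(a + b) * c = a * c + b * c"
    by (simp add: times_ds_def plus_ds_def Rep_ds_inv dmult_def distrib_right sum.distrib)
  show "a * (b + c) = a * b + a * c"
    by (simp add: times_ds_def plus_ds_def Rep_ds_inv dmult_def distrib_left sum.distrib)
  show "(0::ds) \<noteq> 1"
  proof
    assume "(0::ds) = 1"
    then have "Rep_ds 0 0 0 = Rep_ds 1 0 0" by simp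
    then show False by (simp add: zero_ds_def one_ds_def Rep_ds_inv dunit_def)
  qed
qed
end

lemma Rep_times: "Rep_ds (x * y) = dmult (Rep_ds x) (Rep_ds y)"
  by (simp add: times_ds_def Rep_ds_inv)
lemma Rep_plus: "Rep_ds (x + y) k u = Rep_ds x k u + Rep_ds y k u"
  by (simp add: plus_ds_def Rep_ds_inv)
lemma Rep_minus: "Rep_ds (x - y) k u = Rep_ds x k u - Rep_ds y k u"
  by (simp add: minus_ds_def Rep_ds_inv)
lemma Rep_one: "Rep_ds 1 = dunit"
  by (simp add: one_ds_def Rep_ds_inv)
lemma Rep_zero: "Rep_ds 0 k u = 0"
  by (simp add: zero_ds_def Rep_ds_inv)

lemma foldr_dmult: "foldr dmult fs dunit = Rep_ds (prod_list (map Abs_ds fs))"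
  by (induction fs) (simp_all add: Rep_one Rep_times Rep_ds_inv)

definition Kser :: "nat \<Rightarrow> nat \<Rightarrow> ds \<Rightarrow> bool" where
  "Kser n a x \<longleftrightarrow> (\<forall>k u. Rep_ds x k u \<in> KK n a)"

lemma Kser_times: "Kser n a x \<Longrightarrow> Kser n a y \<Longrightarrow> Kser n a (x * y)"
  unfolding Kser_def Rep_times dmult_def by (auto intro!: KK_sum KK_mult)
lemma Kser_plus: "Kser n a x \<Longrightarrow> Kser n a y \<Longrightarrow> Kser n a (x + y)"
  unfolding Kser_def Rep_plus by (auto intro!: KK_add)
lemma Kser_minus: "Kser n a x \<Longrightarrow> Kser n a y \<Longrightarrow> Kser n a (x - y)"
  unfolding Kser_def Rep_minus by (auto intro!: KK_diff)
lemma Kser_one: "Kser n a 1"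
  unfolding Kser_def Rep_one dunit_def by auto
lemma Kser_prod_list: "(\<And>x. x \<in> set xs \<Longrightarrow> Kser n a x) \<Longrightarrow> Kser n a (prod_list xs)"
  by (induction xs) (auto intro: Kser_one Kser_times)

definition Mo :: "(complex \<Rightarrow> lpoly) \<Rightarrow> nat \<Rightarrow> ds" where
  "Mo c d = Abs_ds (dmono c d)"

lemma Kser_Mo: "(\<And>u. c u \<in> KK n a) \<Longrightarrow> Kser n a (Mo c d)"
  unfolding Kser_def Mo_def by (simp add: Rep_ds_inv dmono_def)

lemma Mo_times: "Mo c d * Mo c' d' = Mo (\<lambda>u. c u * c' (u + of_nat d)) (d + d')"
proof -
  have "dmult (dmono c d) (dmono c' d') = dmono (\<lambda>u. c u * c' (u + of_nat d)) (d + d')"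
  proof (intro ext)
    fix k u
    have "dmult (dmono c d) (dmono c' d') k u = (\<Sum>i\<le>k. if i = d then (if k - d = d' then c u * c' (u + of_nat d) else 0) else 0)"
      unfolding dmult_def dmono_def by (intro sum.cong refl) auto
    also have "\<dots> = dmono (\<lambda>u. c u * c' (u + of_nat d)) (d + d') k u"
      by (auto simp: dmono_def)
    finally show "dmult (dmono c d) (dmono c' d') k u = dmono (\<lambda>u. c u * c' (u + of_nat d)) (d + d') k u" .
  qed
  then show ?thesis by (simp add: Mo_def times_ds_def Rep_ds_inv)
qed

lemma Mo_plus: "Mo c d + Mo c' d = Mo (\<lambda>u. c u + c' u) d"
  unfolding Mo_def plus_ds_def Rep_ds_inv by (rule arg_cong[where f=Abs_ds]) (auto simp: fun_eq_iff dmono_def)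

lemma dfac_Mo: "Abs_ds (dfac c) = 1 - Mo c 2"
  by (simp add: dfac_def Mo_def minus_ds_def one_ds_def Rep_ds_inv)

lemma pair_Kser:
  assumes "\<And>u. x u + y u \<in> KK n a" "\<And>u. x u * y (u + 2) \<in> KK n a"
  shows "Kser n a ((1 - Mo x 2) * (1 - Mo y 2))"
proof -
  have "(1 - Mo x 2) * (1 - Mo y 2) = 1 - (Mo x 2 + Mo y 2) + Mo x 2 * Mo y 2"
    by (simp add: algebra_simps)
  also have "\<dots> = 1 - Mo (\<lambda>u. x u + y u) 2 + Mo (\<lambda>u. x u * y (u + 2)) 4"
    by (simp add: Mo_plus Mo_times)
  finally show ?thesis
    using assms by (auto intro!: Kser_plus Kser_minus Kser_one Kser_Mo)
qed



lemma dmult_dmono_left: "dmult (dmono c d) g k u = (if d \<le> k then c u * g (k - d) (u + of_nat d) else 0)"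
proof -
  have "dmult (dmono c d) g k u = (\<Sum>i\<le>k. if i = d then c u * g (k - d) (u + of_nat d) else 0)"
    unfolding dmult_def dmono_def by (intro sum.cong refl) auto
  then show ?thesis by simp
qed

lemma dmult_dmono_right: "dmult g (dmono c d) k u = (if d \<le> k then g (k - d) u * c (u + of_nat (k - d)) else 0)"
proof -
  have "dmult g (dmono c d) k u = (\<Sum>i\<le>k. if i = k - d \<and> d \<le> k then g (k - d) u * c (u + of_nat (k - d)) else 0)"
    unfolding dmult_def dmono_def by (intro sum.cong refl) auto
  then show ?thesis by (simp cong: conj_cong)
qed

definition gg :: "(complex \<Rightarrow> lpoly) \<Rightarrow> dser" where
  "gg c j u = (if 4 dvd j then (\<Prod>i<j div 4. c (u + 4 * of_nat i)) else 0)"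

lemma dpow_mono4: "dpow (dmono c 4) k = dmono (\<lambda>u. \<Prod>i<k. c (u + 4 * of_nat i)) (4 * k)"
proof (induction k)
  case 0 then show ?case by (auto simp: dunit_def dmono_def fun_eq_iff)
next
  case (Suc k)
  show ?case
  proof (intro ext)
    fix j u
    show "dpow (dmono c 4) (Suc k) j u = dmono (\<lambda>u. \<Prod>i<Suc k. c (u + 4 * of_nat i)) (4 * Suc k) j u"
    proof -
      have "(\<Prod>i<Suc k. c (u + 4 * of_nat i)) = c u * (\<Prod>i<k. c (u + 4 + 4 * of_nat i))"
        by (subst prod.lessThan_Suc_shift) (simp add: algebra_simps)
      then show ?thesis
        unfolding dpow.simps Suc dmult_dmono_left
        by (auto simp: dmono_def algebra_simps)
    qed
  qed
qed

lemma dgeom4_gg: "dgeom4 c = gg c"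
proof (intro ext)
  fix j u
  have "dgeom4 c j u = (\<Sum>k\<le>j. if k = j div 4 \<and> 4 dvd j then (\<Prod>i<j div 4. c (u + 4 * of_nat i)) else 0)"
    unfolding dgeom4_def dpow_mono4 by (intro sum.cong refl) (auto simp: dmono_def)
  also have "\<dots> = gg c j u"
    by (simp add: gg_def cong: conj_cong)
  finally show "dgeom4 c j u = gg c j u" .
qed

lemma Kser_geom: "(\<And>u. c u \<in> KK n a) \<Longrightarrow> Kser n a (Abs_ds (dgeom4 c))"
  unfolding Kser_def dgeom4_gg by (auto simp: Rep_ds_inv gg_def intro!: KK_prod)



lemma gg_left: "gg c = (\<lambda>j u. dunit j u + dmult (dmono c 4) (gg c) j u)"
proof (intro ext)
  fix j u
  show "gg c j u = dunit j u + dmult (dmono c 4) (gg c) j u"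
  proof (cases "4 \<le> j")
    case True
    then have d: "dmult (dmono c 4) (gg c) j u = c u * gg c (j - 4) (u + 4)"
      by (simp add: dmult_dmono_left)
    have du: "dunit j u = 0" using True by (simp add: dunit_def)
    show ?thesis
    proof (cases "4 dvd j")
      case True
      then obtain m where m: "j = 4 * Suc m" using \<open>4 \<le> j\<close>
        by (metis dvdE mult_0_right not_numeral_le_zero not0_implies_Suc)
      have jm: "j - 4 = 4 * m" using m by simp
      have "gg c j u = (\<Prod>i<Suc m. c (u + 4 * of_nat i))"
        using m by (simp add: gg_def)
      also have "\<dots> = c u * (\<Prod>i<m. c (u + 4 + 4 * of_nat i))"
        by (subst prod.lessThan_Suc_shift) (simp add: algebra_simps)
      also have "\<dots> = c u * gg c (j - 4) (u + 4)"
        unfolding jm by (simp add: gg_def)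
      finally show ?thesis using d du by simp
    next
      case False
      then have "\<not> 4 dvd (j - 4)" using \<open>4 \<le> j\<close> by presburger
      then show ?thesis using False d du by (simp add: gg_def)
    qed
  next
    case False
    then have "j = 0 \<or> j = 1 \<or> j = 2 \<or> j = 3" by auto
    then show ?thesis using False by (auto simp: gg_def dunit_def dmult_dmono_left)
  qed
qed

lemma gg_right: "gg c = (\<lambda>j u. dunit j u + dmult (gg c) (dmono c 4) j u)"
proof (intro ext)
  fix j u
  show "gg c j u = dunit j u + dmult (gg c) (dmono c 4) j u"
  proof (cases "4 \<le> j")
    case True
    then have d: "dmult (gg c) (dmono c 4) j u = gg c (j - 4) u * c (u + of_nat (j - 4))"
      by (simp add: dmult_dmono_right)
    have du: "dunit j u = 0" using True by (simp add: dunit_def)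
    show ?thesis
    proof (cases "4 dvd j")
      case True
      then obtain m where m: "j = 4 * Suc m" using \<open>4 \<le> j\<close>
        by (metis dvdE mult_0_right not_numeral_le_zero not0_implies_Suc)
      have jm: "j - 4 = 4 * m" using m by simp
      have "gg c j u = (\<Prod>i<Suc m. c (u + 4 * of_nat i))"
        using m by (simp add: gg_def)
      also have "\<dots> = (\<Prod>i<m. c (u + 4 * of_nat i)) * c (u + 4 * of_nat m)"
        by (simp add: mult.commute)
      also have "\<dots> = gg c (j - 4) u * c (u + of_nat (j - 4))"
        unfolding jm by (simp add: gg_def)
      finally show ?thesis using d du by simp
    next
      case False
      then have "\<not> 4 dvd (j - 4)" using \<open>4 \<le> j\<close> by presburger
      then show ?thesis using False d du by (simp add: gg_def)
    qed
  next
    case False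
    then have "j = 0 \<or> j = 1 \<or> j = 2 \<or> j = 3" by auto
    then show ?thesis using False by (auto simp: gg_def dunit_def dmult_dmono_right)
  qed
qed



lemma geom_inv:
  shows "(1 - Mo c 4) * Abs_ds (dgeom4 c) = 1" "Abs_ds (dgeom4 c) * (1 - Mo c 4) = 1"
proof -
  have "Abs_ds (dgeom4 c) = 1 + Mo c 4 * Abs_ds (dgeom4 c)"
    unfolding dgeom4_gg plus_ds_def one_ds_def times_ds_def Mo_def Rep_ds_inv
    by (subst (1) gg_left) simp
  then show "(1 - Mo c 4) * Abs_ds (dgeom4 c) = 1"
    by (simp add: algebra_simps)
  have "Abs_ds (dgeom4 c) = 1 + Abs_ds (dgeom4 c) * Mo c 4"
    unfolding dgeom4_gg plus_ds_def one_ds_def times_ds_def Mo_def Rep_ds_inv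
    by (subst (1) gg_right) simp
  then show "Abs_ds (dgeom4 c) * (1 - Mo c 4) = 1"
    by (simp add: algebra_simps)
qed


lemma swap_identity:
  fixes X Y G G' :: ds
  assumes a1: "(1 - Y * X) * G = 1" and a2: "G * (1 - Y * X) = 1"
    and a3: "(1 - X * Y) * G' = 1" and a4: "G' * (1 - X * Y) = 1"
  shows "(1 - X) * G * (1 - Y) = (1 - Y) * G' * (1 - X)"
proof -
  have G: "G = 1 + Y * X * G" using a1 by (simp add: algebra_simps)
  have G': "G' = 1 + X * Y * G'" using a3 by (simp add: algebra_simps)
  have e1: "G' * X * (1 - Y * X) = G' * (1 - X * Y) * X" by (simp add: algebra_simps)
  have GX: "G' * X = X * G"
  proof -
    have "G' * X = G' * X * ((1 - Y * X) * G)" by (simp add: a1)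
    also have "\<dots> = (G' * X * (1 - Y * X)) * G" by (simp only: mult.assoc)
    also have "\<dots> = (G' * (1 - X * Y)) * X * G" by (simp only: e1)
    also have "\<dots> = X * G" by (simp add: a4)
    finally show ?thesis .
  qed
  have e2: "(1 - Y * X) * Y * G' = Y * ((1 - X * Y) * G')" by (simp add: algebra_simps)
  have e3: "Y * (1 - X * Y) = (1 - Y * X) * Y" by (simp add: algebra_simps)
  have YG: "Y * G' = G * Y"
  proof -
    have "G * Y = G * Y * ((1 - X * Y) * G')" by (simp add: a3)
    also have "\<dots> = G * (Y * (1 - X * Y)) * G'" by (simp only: mult.assoc)
    also have "\<dots> = (G * (1 - Y * X)) * Y * G'" by (simp only: e3 mult.assoc)
    also have "\<dots> = Y * G'" by (simp add: a2)
    finally show ?thesis by simp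
  qed
  have "(1 - X) * G * (1 - Y) = G - X * G - G * Y + X * (G * Y)"
    by (simp add: algebra_simps)
  also have "\<dots> = G - X * G - G * Y + X * Y * G'"
    by (simp add: YG[symmetric] mult.assoc)
  also have "\<dots> = (1 + Y * X * G) - X * G - G * Y + X * Y * G'"
    using G by simp
  also have "\<dots> = (1 + X * Y * G') - G * Y - X * G + Y * (X * G)"
    by (simp add: algebra_simps)
  also have "\<dots> = G' - Y * G' - G' * X + Y * (G' * X)"
    using G' by (simp add: GX YG)
  also have "\<dots> = (1 - Y) * G' * (1 - X)"
    by (simp add: algebra_simps)
  finally show ?thesis .
qed



definition Ye :: "nat \<Rightarrow> complex \<Rightarrow> (var \<Rightarrow>\<^sub>0 int)" where
  "Ye b v = (if b = 0 then 0 else Poly_Mapping.single (b, v) 1)"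

definition Ee :: "nat \<Rightarrow> complex \<Rightarrow> (var \<Rightarrow>\<^sub>0 int)" where
  "Ee b v = embexp (Ye b v)"

lemma Ee0[simp]: "Ee 0 v = 0" by (simp add: Ee_def Ye_def)

lemma Yv_Ye: "Yv b v = lmono (Ye b v)"
  by (simp add: Yv_def Ye_def lmono_zero)
lemma Yinv_Ye: "Yinv b v = lmono (- Ye b v)"
  by (simp add: Yinv_def Ye_def lmono_zero lmono_def single_uminus)

lemma sv_Ye[simp]: "1 \<le> a \<Longrightarrow> sv a (Ye b v) = (if b = a then Svar a v else 0)"
  by (simp add: Ye_def sv_single)

lemma pos_simps:
  fixes x :: complex
  shows "x - 1 - 1 = x - 2" "x + 1 + 1 = x + 2" "x - 2 + 1 = x - 1" "x - 2 + 2 = x" "x + 2 - 1 = x + 1"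
    "x + 1 - 2 = x - 1" "x - 1 + 2 = x + 1" "x + 2 - 2 = x" "x - 2 - 1 = x - 3" "x - 3 + 2 = x - 1"
    "x - 3 + 1 = x - 2" "x + 2 - 3 = x - 1" "x + 3 - 2 = x + 1" "x + 1 + 2 = x + 3" "x + 2 + 1 = x + 3"
  by (simp_all add: algebra_simps)

lemma Aexp_term:
  assumes "1 \<le> b"
  shows "Poly_Mapping.single (b, w - of_int (cartanD n a b)) 1 - Poly_Mapping.single (b, w + of_int (cartanD n a b)) 1
    = (if cartanD n a b = 2 then Ee b (w - 1) + Ee b (w + 1) else if cartanD n a b = -1 then - Ee b w else 0)"
proof -
  have "cartanD n a b = 2 \<or> cartanD n a b = -1 \<or> cartanD n a b = 0"
    by (simp add: cartanD_def)
  then show ?thesis using assms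
    by (auto simp: Ee_def Ye_def embexp_single pos_simps)
qed

lemma Aexp_sum: "Aexp n a w = (\<Sum>b\<in>{1..n}. if cartanD n a b = 2 then Ee b (w - 1) + Ee b (w + 1) else if cartanD n a b = -1 then - Ee b w else 0)"
  unfolding Aexp_def by (intro sum.cong refl) (simp add: Aexp_term)

lemma Aexp_nbrs:
  assumes aN: "a \<in> {1..n}" and N: "N \<subseteq> {1..n}" "a \<notin> N"
    and C: "\<And>b. b \<in> {1..n} \<Longrightarrow> cartanD n a b = (if b = a then 2 else if b \<in> N then -1 else 0)"
  shows "Aexp n a w = Ee a (w - 1) + Ee a (w + 1) - (\<Sum>b\<in>N. Ee b w)"
proof -
  have "Aexp n a w = (\<Sum>b\<in>{1..n}. (if b = a then Ee a (w - 1) + Ee a (w + 1) else 0) + (if b \<in> N then - Ee b w else 0))"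
    unfolding Aexp_sum by (intro sum.cong refl) (use N in \<open>auto simp: C\<close>)
  also have "\<dots> = Ee a (w - 1) + Ee a (w + 1) + (\<Sum>b\<in>{1..n} \<inter> N. - Ee b w)"
    using aN by (simp add: sum.distrib sum.inter_restrict)
  also have "{1..n} \<inter> N = N" using N by auto
  finally show ?thesis by (simp add: sum_negf)
qed

lemma Aexp_A:
  assumes "1 \<le> a" "a + 3 \<le> n"
  shows "Aexp n a w = Ee a (w - 1) + Ee a (w + 1) - Ee (a - 1) w - Ee (a + 1) w"
proof (cases "a = 1")
  case True
  have "Aexp n a w = Ee a (w - 1) + Ee a (w + 1) - (\<Sum>b\<in>{a+1}. Ee b w)"
    apply (rule Aexp_nbrs) using assms True apply auto[3]
    subgoal for b using assms True by (cases "b = a"; cases "b = a + 1"; (simp add: cartanD_def)?; arith?)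
    done
  then show ?thesis using True by simp
next
  case False
  have "Aexp n a w = Ee a (w - 1) + Ee a (w + 1) - (\<Sum>b\<in>{a-1,a+1}. Ee b w)"
    apply (rule Aexp_nbrs) using assms False apply auto[3]
    subgoal for b using assms False by (cases "b = a"; cases "b = a + 1"; cases "b = a - 1"; (simp add: cartanD_def)?; arith?)
    done
  then show ?thesis using False by (simp add: algebra_simps)
qed

lemma Aexp_B:
  assumes "4 \<le> n"
  shows "Aexp n (n - 2) w = Ee (n - 2) (w - 1) + Ee (n - 2) (w + 1) - Ee (n - 3) w - Ee (n - 1) w - Ee n w"
proof -
  have "Aexp n (n - 2) w = Ee (n - 2) (w - 1) + Ee (n - 2) (w + 1) - (\<Sum>b\<in>{n-3,n-1,n}. Ee b w)"
    apply (rule Aexp_nbrs) using assms apply auto[3]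
    subgoal for b using assms by (cases "b = n-2"; cases "b = n-3"; cases "b = n-1"; cases "b = n"; (simp add: cartanD_def)?; arith?)
    done
  moreover have "n - 3 \<noteq> n - 1" "n - 3 \<noteq> n" "n - 1 \<noteq> n" using assms by auto
  ultimately show ?thesis by (simp add: algebra_simps)
qed

lemma Aexp_C:
  assumes "4 \<le> n"
  shows "Aexp n (n - 1) w = Ee (n - 1) (w - 1) + Ee (n - 1) (w + 1) - Ee (n - 2) w"
proof -
  have "Aexp n (n - 1) w = Ee (n - 1) (w - 1) + Ee (n - 1) (w + 1) - (\<Sum>b\<in>{n-2}. Ee b w)"
    apply (rule Aexp_nbrs) using assms apply auto[3]
    subgoal for b using assms by (cases "b = n-1"; cases "b = n-2"; (simp add: cartanD_def)?; arith?)
    done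
  then show ?thesis using assms by (simp add: algebra_simps)
qed

lemma Aexp_D:
  assumes "4 \<le> n"
  shows "Aexp n n w = Ee n (w - 1) + Ee n (w + 1) - Ee (n - 2) w"
proof -
  have "Aexp n n w = Ee n (w - 1) + Ee n (w + 1) - (\<Sum>b\<in>{n-2}. Ee b w)"
    apply (rule Aexp_nbrs) using assms apply auto[3]
    subgoal for b using assms by (cases "b = n"; cases "b = n-2"; (simp add: cartanD_def)?; arith?)
    done
  then show ?thesis using assms by (simp add: algebra_simps)
qed



definition zze :: "nat \<Rightarrow> nat \<Rightarrow> complex \<Rightarrow> (var \<Rightarrow>\<^sub>0 int)" where
  "zze n a u =
     (if a \<le> n - 2 then Ye a (u + of_nat a) - Ye (a - 1) (u + of_nat a + 1)
      else if a = n - 1 then Ye n (u + of_nat n - 1) + Ye (n - 1) (u + of_nat n - 1)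
                              - Ye (n - 2) (u + of_nat n)
      else Ye n (u + of_nat n - 1) - Ye (n - 1) (u + of_nat n + 1))"

definition zbe :: "nat \<Rightarrow> nat \<Rightarrow> complex \<Rightarrow> (var \<Rightarrow>\<^sub>0 int)" where
  "zbe n a u =
     (if a \<le> n - 2 then Ye (a - 1) (u + 2 * of_nat n - of_nat a - 1)
                         - Ye a (u + 2 * of_nat n - of_nat a)
      else if a = n - 1 then Ye (n - 2) (u + of_nat n)
                              - Ye n (u + of_nat n + 1) - Ye (n - 1) (u + of_nat n + 1)
      else Ye (n - 1) (u + of_nat n - 1) - Ye n (u + of_nat n + 1))"

lemma zz_lmono: "zz n a u = lmono (zze n a u)"
  by (simp add: zz_def zze_def Yv_Ye Yinv_Ye lmono_mult)

lemma zbar_lmono: "zbar n a u = lmono (zbe n a u)"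
  by (simp add: zbar_def zbe_def Yv_Ye Yinv_Ye lmono_mult)

lemma zbe_low: "b \<le> n - 2 \<Longrightarrow> zbe n b u = Ye (b - 1) (u + 2 * of_nat n - of_nat b - 1) - Ye b (u + 2 * of_nat n - of_nat b)"
  by (subst zbe_def) (simp only: if_True)
lemma zbe_n1: "4 \<le> n \<Longrightarrow> zbe n (n - 1) u = Ye (n - 2) (u + of_nat n) - Ye n (u + of_nat n + 1) - Ye (n - 1) (u + of_nat n + 1)"
proof -
  assume "4 \<le> n"
  then have h: "(n - 1 \<le> n - 2) = False" by auto
  show ?thesis by (subst zbe_def) (simp only: h if_False if_True refl)
qed
lemma zbe_n: "4 \<le> n \<Longrightarrow> zbe n n u = Ye (n - 1) (u + of_nat n - 1) - Ye n (u + of_nat n + 1)"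
proof -
  assume "4 \<le> n"
  then have h: "(n \<le> n - 2) = False" "(n = n - 1) = False" by auto
  show ?thesis by (subst zbe_def) (simp only: h if_False if_True refl)
qed
lemma zze_low: "b \<le> n - 2 \<Longrightarrow> zze n b u = Ye b (u + of_nat b) - Ye (b - 1) (u + of_nat b + 1)"
  by (subst zze_def) (simp only: if_True)
lemma zze_n1: "4 \<le> n \<Longrightarrow> zze n (n - 1) u = Ye n (u + of_nat n - 1) + Ye (n - 1) (u + of_nat n - 1) - Ye (n - 2) (u + of_nat n)"
proof -
  assume "4 \<le> n"
  then have h: "(n - 1 \<le> n - 2) = False" by auto
  show ?thesis by (subst zze_def) (simp only: h if_False if_True refl)
qed
lemma zze_n: "4 \<le> n \<Longrightarrow> zze n n u = Ye n (u + of_nat n - 1) - Ye (n - 1) (u + of_nat n + 1)"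
proof -
  assume "4 \<le> n"
  then have h: "(n \<le> n - 2) = False" "(n = n - 1) = False" by auto
  show ?thesis by (subst zze_def) (simp only: h if_False if_True refl)
qed

lemma Ee_diff: "embexp (x - y) = embexp x - embexp y" by (rule embexp_diff)

lemma pair_rel':
  assumes "1 \<le> a" "a \<le> n" "sv a e1 = Svar a w" "sv a e2 = - Svar a (w + 2)"
    "embexp e1 = embexp e2 + Aexp n a (w + 1)"
  shows "lmono e2 + lmono e1 \<in> KK n a"
  using pair_rel[OF assms] by (simp add: add.commute)

lemma caseA_bar:
  assumes "1 \<le> a" "a + 3 \<le> n"
  shows "Kser n a ((1 - Mo (zbar n a) 2) * (1 - Mo (zbar n (a + 1)) 2))"
proof (rule pair_Kser)
  fix u :: complex
  define c where "c = u + 2 * of_nat n - of_nat a"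
  have p: "u + 2 * of_nat n - of_nat (a+1) - 1 = c - 2" "u + 2 + 2 * of_nat n - of_nat (a+1) - 1 = c"
   "u + 2 + 2 * of_nat n - of_nat (a+1) = c + 1" "u + 2 * of_nat n - of_nat (a + 1) = c - 1"
   "u + 2 * of_nat n - of_nat a - 1 = c - 1" "u + 2 * of_nat n - of_nat a = c"
    by (simp_all add: c_def algebra_simps)
  have i: "a \<le> n - 2" "a + 1 \<le> n - 2" "a - 1 \<noteq> a" "a + 1 \<noteq> a" using assms by auto
  have x: "zbar n a u = lmono (Ye (a-1) (c-1) - Ye a c)"
    unfolding zbar_lmono zbe_low[OF i(1)] p by (simp add: pos_simps)
  have y: "zbar n (a+1) u = lmono (Ye a (c-2) - Ye (a+1) (c-1))"
    unfolding zbar_lmono zbe_low[OF i(2)] p by (simp add: pos_simps)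
  have y2: "zbar n (a+1) (u + 2) = lmono (Ye a c - Ye (a+1) (c+1))"
    unfolding zbar_lmono zbe_low[OF i(2)] p by (simp add: pos_simps)
  show "zbar n a u + zbar n (a + 1) u \<in> KK n a"
    unfolding x y
    apply (rule pair_rel'[where w = "c - 2"])
    using assms i by (simp_all add: sv_diff sv_add Ee_diff embexp_add Ee_def[symmetric] Aexp_A pos_simps algebra_simps)
  show "zbar n a u * zbar n (a + 1) (u + 2) \<in> KK n a"
    unfolding x y2 lmono_mult
    by (rule KK_lmono0) (use assms i in \<open>simp add: sv_add sv_diff sv_uminus\<close>)
qed

lemma caseA_z:
  assumes "1 \<le> a" "a + 3 \<le> n"
  shows "Kser n a ((1 - Mo (zz n (a + 1)) 2) * (1 - Mo (zz n a) 2))"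
proof (rule pair_Kser)
  fix u :: complex
  define d where "d = u + of_nat a"
  have p: "u + of_nat (a+1) = d + 1" "u + of_nat a = d" "u + 2 + of_nat a = d + 2"
    by (simp_all add: d_def algebra_simps)
  have i: "a \<le> n - 2" "a + 1 \<le> n - 2" "a - 1 \<noteq> a" "a + 1 \<noteq> a" using assms by auto
  have x: "zz n (a+1) u = lmono (Ye (a+1) (d+1) - Ye a (d+2))"
    unfolding zz_lmono zze_low[OF i(2)] p by (simp add: pos_simps)
  have y: "zz n a u = lmono (Ye a d - Ye (a-1) (d+1))"
    unfolding zz_lmono zze_low[OF i(1)] p by (simp add: pos_simps)
  have y2: "zz n a (u + 2) = lmono (Ye a (d+2) - Ye (a-1) (d+3))"
    unfolding zz_lmono zze_low[OF i(1)] p by (simp add: pos_simps)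
  show "zz n (a + 1) u + zz n a u \<in> KK n a"
    unfolding x y
    apply (rule pair_rel'[where w = "d"])
    using assms i by (simp_all add: sv_diff sv_add Ee_diff embexp_add Ee_def[symmetric] Aexp_A pos_simps algebra_simps)
  show "zz n (a + 1) u * zz n a (u + 2) \<in> KK n a"
    unfolding x y2 lmono_mult
    by (rule KK_lmono0) (use assms i in \<open>simp add: sv_add sv_diff sv_uminus\<close>)
qed

lemma caseB_bar:
  assumes "4 \<le> n"
  shows "Kser n (n - 2) ((1 - Mo (zbar n (n - 2)) 2) * (1 - Mo (zbar n (n - 1)) 2))"
proof (rule pair_Kser)
  fix u :: complex
  define c where "c = u + of_nat n"
  have p: "u + 2 * of_nat n - of_nat (n - 2) = c + 2" "u + of_nat n = c" "u + 2 + of_nat n = c + 2"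
    using assms by (simp_all add: c_def algebra_simps of_nat_diff)
  have i: "n - 2 \<le> n - 2" "n - 2 - 1 = n - 3" "n \<noteq> n - 2" "n - 1 \<noteq> n - 2" "n - 3 \<noteq> n - 2" "1 \<le> n - 2" using assms by auto
  have x: "zbar n (n-2) u = lmono (Ye (n-3) (c+1) - Ye (n-2) (c+2))"
    unfolding zbar_lmono zbe_low[OF i(1)] p i(2) by (simp add: pos_simps)
  have y: "zbar n (n-1) u = lmono (Ye (n-2) c - Ye n (c+1) - Ye (n-1) (c+1))"
    unfolding zbar_lmono zbe_n1[OF assms] p by (simp add: pos_simps)
  have y2: "zbar n (n-1) (u + 2) = lmono (Ye (n-2) (c+2) - Ye n (c+3) - Ye (n-1) (c+3))"
    unfolding zbar_lmono zbe_n1[OF assms] p by (simp add: pos_simps)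
  show "zbar n (n-2) u + zbar n (n-1) u \<in> KK n (n-2)"
    unfolding x y
    apply (rule pair_rel'[where w = "c"])
    using assms i by (simp_all add: sv_diff sv_add Ee_diff embexp_add Ee_def[symmetric] Aexp_B pos_simps algebra_simps)
  show "zbar n (n-2) u * zbar n (n-1) (u + 2) \<in> KK n (n-2)"
    unfolding x y2 lmono_mult
    by (rule KK_lmono0) (use assms i in \<open>simp add: sv_add sv_diff sv_uminus\<close>)
qed

lemma caseB_z:
  assumes "4 \<le> n"
  shows "Kser n (n - 2) ((1 - Mo (zz n (n - 1)) 2) * (1 - Mo (zz n (n - 2)) 2))"
proof (rule pair_Kser)
  fix u :: complex
  define c where "c = u + of_nat n"
  have p: "u + of_nat (n - 2) = c - 2" "u + of_nat n = c" "u + 2 + of_nat (n - 2) = c"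
    using assms by (simp_all add: c_def algebra_simps of_nat_diff)
  have i: "n - 2 \<le> n - 2" "n - 2 - 1 = n - 3" "n \<noteq> n - 2" "n - 1 \<noteq> n - 2" "n - 3 \<noteq> n - 2" "1 \<le> n - 2" using assms by auto
  have x: "zz n (n-1) u = lmono (Ye n (c-1) + Ye (n-1) (c-1) - Ye (n-2) c)"
    unfolding zz_lmono zze_n1[OF assms] p by (simp add: pos_simps)
  have y: "zz n (n-2) u = lmono (Ye (n-2) (c-2) - Ye (n-3) (c-1))"
    unfolding zz_lmono zze_low[OF i(1)] p i(2) by (simp add: pos_simps)
  have y2: "zz n (n-2) (u + 2) = lmono (Ye (n-2) c - Ye (n-3) (c+1))"
    unfolding zz_lmono zze_low[OF i(1)] p i(2) by (simp add: pos_simps)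
  show "zz n (n-1) u + zz n (n-2) u \<in> KK n (n-2)"
    unfolding x y
    apply (rule pair_rel'[where w = "c - 2"])
    using assms i by (simp_all add: sv_diff sv_add Ee_diff embexp_add Ee_def[symmetric] Aexp_B pos_simps algebra_simps)
  show "zz n (n-1) u * zz n (n-2) (u + 2) \<in> KK n (n-2)"
    unfolding x y2 lmono_mult
    by (rule KK_lmono0) (use assms i in \<open>simp add: sv_add sv_diff sv_uminus\<close>)
qed

lemma caseC_bar:
  assumes "4 \<le> n"
  shows "Kser n (n - 1) ((1 - Mo (zbar n (n - 1)) 2) * (1 - Mo (zbar n n) 2))"
proof (rule pair_Kser)
  fix u :: complex
  define c where "c = u + of_nat n"
  have p: "u + of_nat n = c" "u + 2 + of_nat n = c + 2"
    using assms by (simp_all add: c_def algebra_simps)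
  have i: "n \<noteq> n - 1" "n - 2 \<noteq> n - 1" "1 \<le> n - 1" using assms by auto
  have x: "zbar n (n-1) u = lmono (Ye (n-2) c - Ye n (c+1) - Ye (n-1) (c+1))"
    unfolding zbar_lmono zbe_n1[OF assms] p by (simp add: pos_simps)
  have y: "zbar n n u = lmono (Ye (n-1) (c-1) - Ye n (c+1))"
    unfolding zbar_lmono zbe_n[OF assms] p by (simp add: pos_simps)
  have y2: "zbar n n (u + 2) = lmono (Ye (n-1) (c+1) - Ye n (c+3))"
    unfolding zbar_lmono zbe_n[OF assms] p by (simp add: pos_simps)
  show "zbar n (n-1) u + zbar n n u \<in> KK n (n-1)"
    unfolding x y
    apply (rule pair_rel'[where w = "c - 1"])
    using assms i by (simp_all add: sv_diff sv_add Ee_diff embexp_add Ee_def[symmetric] Aexp_C[OF assms, simplified] pos_simps algebra_simps)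
  show "zbar n (n-1) u * zbar n n (u + 2) \<in> KK n (n-1)"
    unfolding x y2 lmono_mult
    by (rule KK_lmono0) (use assms i in \<open>simp add: sv_add sv_diff sv_uminus\<close>)
qed

lemma caseC_z:
  assumes "4 \<le> n"
  shows "Kser n (n - 1) ((1 - Mo (zz n n) 2) * (1 - Mo (zz n (n - 1)) 2))"
proof (rule pair_Kser)
  fix u :: complex
  define c where "c = u + of_nat n"
  have p: "u + of_nat n = c" "u + 2 + of_nat n = c + 2"
    using assms by (simp_all add: c_def algebra_simps)
  have i: "n \<noteq> n - 1" "n - 2 \<noteq> n - 1" "1 \<le> n - 1" using assms by auto
  have x: "zz n n u = lmono (Ye n (c-1) - Ye (n-1) (c+1))"
    unfolding zz_lmono zze_n[OF assms] p by (simp add: pos_simps)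
  have y: "zz n (n-1) u = lmono (Ye n (c-1) + Ye (n-1) (c-1) - Ye (n-2) c)"
    unfolding zz_lmono zze_n1[OF assms] p by (simp add: pos_simps)
  have y2: "zz n (n-1) (u + 2) = lmono (Ye n (c+1) + Ye (n-1) (c+1) - Ye (n-2) (c+2))"
    unfolding zz_lmono zze_n1[OF assms] p by (simp add: pos_simps)
  show "zz n n u + zz n (n-1) u \<in> KK n (n-1)"
    unfolding x y
    apply (rule pair_rel'[where w = "c - 1"])
    using assms i by (simp_all add: sv_diff sv_add Ee_diff embexp_add Ee_def[symmetric] Aexp_C[OF assms, simplified] pos_simps algebra_simps)
  show "zz n n u * zz n (n-1) (u + 2) \<in> KK n (n-1)"
    unfolding x y2 lmono_mult
    by (rule KK_lmono0) (use assms i in \<open>simp add: sv_add sv_diff sv_uminus\<close>)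
qed

lemma caseD_1:
  assumes "4 \<le> n"
  shows "Kser n n ((1 - Mo (zbar n (n - 1)) 2) * (1 - Mo (zz n n) 2))"
proof (rule pair_Kser)
  fix u :: complex
  define c where "c = u + of_nat n"
  have p: "u + of_nat n = c" "u + 2 + of_nat n = c + 2"
    using assms by (simp_all add: c_def algebra_simps)
  have i: "n - 1 \<noteq> n" "n - 2 \<noteq> n" "1 \<le> n" using assms by auto
  have x: "zbar n (n-1) u = lmono (Ye (n-2) c - Ye n (c+1) - Ye (n-1) (c+1))"
    unfolding zbar_lmono zbe_n1[OF assms] p by (simp add: pos_simps)
  have y: "zz n n u = lmono (Ye n (c-1) - Ye (n-1) (c+1))"
    unfolding zz_lmono zze_n[OF assms] p by (simp add: pos_simps)
  have y2: "zz n n (u + 2) = lmono (Ye n (c+1) - Ye (n-1) (c+3))"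
    unfolding zz_lmono zze_n[OF assms] p by (simp add: pos_simps)
  show "zbar n (n-1) u + zz n n u \<in> KK n n"
    unfolding x y
    apply (rule pair_rel'[where w = "c - 1"])
    using assms i by (simp_all add: sv_diff sv_add Ee_diff embexp_add Ee_def[symmetric] Aexp_D pos_simps algebra_simps)
  show "zbar n (n-1) u * zz n n (u + 2) \<in> KK n n"
    unfolding x y2 lmono_mult
    by (rule KK_lmono0) (use assms i in \<open>simp add: sv_add sv_diff sv_uminus\<close>)
qed

lemma caseD_2:
  assumes "4 \<le> n"
  shows "Kser n n ((1 - Mo (zbar n n) 2) * (1 - Mo (zz n (n - 1)) 2))"
proof (rule pair_Kser)
  fix u :: complex
  define c where "c = u + of_nat n"
  have p: "u + of_nat n = c" "u + 2 + of_nat n = c + 2"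
    using assms by (simp_all add: c_def algebra_simps)
  have i: "n - 1 \<noteq> n" "n - 2 \<noteq> n" "1 \<le> n" using assms by auto
  have x: "zbar n n u = lmono (Ye (n-1) (c-1) - Ye n (c+1))"
    unfolding zbar_lmono zbe_n[OF assms] p by (simp add: pos_simps)
  have y: "zz n (n-1) u = lmono (Ye n (c-1) + Ye (n-1) (c-1) - Ye (n-2) c)"
    unfolding zz_lmono zze_n1[OF assms] p by (simp add: pos_simps)
  have y2: "zz n (n-1) (u + 2) = lmono (Ye n (c+1) + Ye (n-1) (c+1) - Ye (n-2) (c+2))"
    unfolding zz_lmono zze_n1[OF assms] p by (simp add: pos_simps)
  show "zbar n n u + zz n (n-1) u \<in> KK n n"
    unfolding x y
    apply (rule pair_rel'[where w = "c - 1"])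
    using assms i by (simp_all add: sv_diff sv_add Ee_diff embexp_add Ee_def[symmetric] Aexp_D pos_simps algebra_simps)
  show "zbar n n u * zz n (n-1) (u + 2) \<in> KK n n"
    unfolding x y2 lmono_mult
    by (rule KK_lmono0) (use assms i in \<open>simp add: sv_add sv_diff sv_uminus\<close>)
qed



definition free :: "nat \<Rightarrow> nat \<Rightarrow> nat \<Rightarrow> bool" where
  "free n a b \<longleftrightarrow> (b \<le> n - 2 \<longrightarrow> a \<noteq> b \<and> a + 1 \<noteq> b) \<and>
     (b = n - 1 \<longrightarrow> a \<noteq> n - 2 \<and> a \<noteq> n \<and> a \<noteq> n - 1) \<and> (b = n \<longrightarrow> a \<noteq> n - 1 \<and> a \<noteq> n)"

lemma Kser_fac: "(\<And>u. c u \<in> KK n a) \<Longrightarrow> Kser n a (1 - Mo c 2)"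
  by (intro Kser_minus Kser_one Kser_Mo)

lemma bar_other:
  assumes "4 \<le> n" "1 \<le> a" "1 \<le> b" "b \<le> n" "free n a b"
  shows "Kser n a (1 - Mo (zbar n b) 2)"
proof (rule Kser_fac)
  fix u
  have "b \<le> n - 2 \<or> b = n - 1 \<or> b = n" using assms by arith
  then have "sv a (zbe n b u) = 0"
  proof (elim disjE)
    assume h: "b \<le> n - 2"
    then have "a \<noteq> b" "b - 1 \<noteq> a" using assms by (auto simp: free_def)
    then show ?thesis using assms by (simp add: zbe_low[OF h] sv_diff)
  next
    assume h: "b = n - 1"
    then have "a \<noteq> n - 2" "a \<noteq> n" "a \<noteq> n - 1" using assms by (auto simp: free_def)
    then show ?thesis using assms unfolding h zbe_n1[OF assms(1)] by (simp add: sv_diff)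
  next
    assume h: "b = n"
    then have "a \<noteq> n" "a \<noteq> n - 1" using assms by (auto simp: free_def)
    then show ?thesis using assms by (simp add: h zbe_n sv_diff)
  qed
  then show "zbar n b u \<in> KK n a" by (simp add: zbar_lmono KK_lmono0)
qed

lemma z_other:
  assumes "4 \<le> n" "1 \<le> a" "1 \<le> b" "b \<le> n" "free n a b"
  shows "Kser n a (1 - Mo (zz n b) 2)"
proof (rule Kser_fac)
  fix u
  have "b \<le> n - 2 \<or> b = n - 1 \<or> b = n" using assms by arith
  then have "sv a (zze n b u) = 0"
  proof (elim disjE)
    assume h: "b \<le> n - 2"
    then have "a \<noteq> b" "b - 1 \<noteq> a" using assms by (auto simp: free_def)
    then show ?thesis using assms by (simp add: zze_low[OF h] sv_diff)
  next
    assume h: "b = n - 1"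
    then have "a \<noteq> n - 2" "a \<noteq> n" "a \<noteq> n - 1" using assms by (auto simp: free_def)
    then show ?thesis using assms unfolding h zze_n1[OF assms(1)] by (simp add: sv_diff sv_add)
  next
    assume h: "b = n"
    then have "a \<noteq> n" "a \<noteq> n - 1" using assms by (auto simp: free_def)
    then show ?thesis using assms by (simp add: h zze_n sv_diff)
  qed
  then show "zz n b u \<in> KK n a" by (simp add: zz_lmono KK_lmono0)
qed

lemma G_other:
  assumes "4 \<le> n" "1 \<le> a" "a \<noteq> n"
  shows "Kser n a (Abs_ds (dgeom4 (\<lambda>u. zz n n u * zbar n n (u + 2))))"
proof (rule Kser_geom)
  fix u :: complex
  define c where "c = u + of_nat n"
  have p: "u + of_nat n = c" "u + 2 + of_nat n = c + 2"
    by (simp_all add: c_def algebra_simps)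
  have x: "zz n n u = lmono (Ye n (c-1) - Ye (n-1) (c+1))"
    unfolding zz_lmono zze_n[OF assms(1)] p by (simp add: pos_simps)
  have y2: "zbar n n (u + 2) = lmono (Ye (n-1) (c+1) - Ye n (c+3))"
    unfolding zbar_lmono zbe_n[OF assms(1)] p by (simp add: pos_simps)
  show "zz n n u * zbar n n (u + 2) \<in> KK n a"
    unfolding x y2 lmono_mult
    by (rule KK_lmono0) (use assms in \<open>simp add: sv_add sv_diff sv_uminus\<close>)
qed

lemma G'_n:
  assumes "4 \<le> n"
  shows "Kser n n (Abs_ds (dgeom4 (\<lambda>u. zbar n n u * zz n n (u + 2))))"
proof (rule Kser_geom)
  fix u :: complex
  define c where "c = u + of_nat n"
  have p: "u + of_nat n = c" "u + 2 + of_nat n = c + 2"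
    by (simp_all add: c_def algebra_simps)
  have x: "zbar n n u = lmono (Ye (n-1) (c-1) - Ye n (c+1))"
    unfolding zbar_lmono zbe_n[OF assms(1)] p by (simp add: pos_simps)
  have y2: "zz n n (u + 2) = lmono (Ye n (c+1) - Ye (n-1) (c+3))"
    unfolding zz_lmono zze_n[OF assms(1)] p by (simp add: pos_simps)
  have "n - 1 \<noteq> n" using assms by auto
  then show "zbar n n u * zz n n (u + 2) \<in> KK n n"
    unfolding x y2 lmono_mult
    by (intro KK_lmono0) (use assms in \<open>simp add: sv_add sv_diff sv_uminus\<close>)
qed

lemma Lser_prod: "Lser n = Rep_ds (prod_list (map (\<lambda>b. 1 - Mo (zbar n b) 2) [1..<n+1])
   * Abs_ds (dgeom4 (\<lambda>u. zz n n u * zbar n n (u + 2)))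
   * prod_list (map (\<lambda>b. 1 - Mo (zz n b) 2) (rev [1..<n+1])))"
proof -
  have m1: "map Abs_ds (map (\<lambda>b. dfac (zbar n b)) xs) = map (\<lambda>b. 1 - Mo (zbar n b) 2) xs" for xs
    by (simp add: dfac_Mo)
  have m2: "map Abs_ds (map (\<lambda>b. dfac (zz n b)) xs) = map (\<lambda>b. 1 - Mo (zz n b) 2) xs" for xs
    by (simp add: dfac_Mo)
  show ?thesis
    unfolding Lser_def foldr_dmult map_append prod_list.append m1 m2
    by (simp add: mult.assoc)
qed

lemma upt_split: "1 \<le> a \<Longrightarrow> a + 1 \<le> n \<Longrightarrow> [1..<n+1] = [1..<a] @ a # (a+1) # [a+2..<n+1]"
proof -
  assume h: "1 \<le> a" "a + 1 \<le> n"
  have "[1..<n+1] = [1..<a] @ [a..<a + (n + 1 - a)]"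
    using upt_add_eq_append[of 1 a "n + 1 - a"] h by simp
  also have "[a..<a + (n + 1 - a)] = a # (a+1) # [a+2..<n+1]"
    using h by (simp add: upt_conv_Cons)
  finally show ?thesis .
qed

lemma prodF:
  assumes "1 \<le> a" "a + 1 \<le> n" "\<And>b. 1 \<le> b \<Longrightarrow> b \<le> n \<Longrightarrow> b \<noteq> a \<Longrightarrow> b \<noteq> a + 1 \<Longrightarrow> Kser n a' (F b)"
    "Kser n a' (F a * F (a + 1))"
  shows "Kser n a' (prod_list (map F [1..<n+1]))"
proof -
  have "prod_list (map F [1..<n+1]) = prod_list (map F [1..<a]) * (F a * F (a + 1)) * prod_list (map F [a+2..<n+1])"
    unfolding upt_split[OF assms(1,2)] by (simp add: mult.assoc)
  then show ?thesis
    using assms by (auto intro!: Kser_times Kser_prod_list)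
qed

lemma prodH:
  assumes "1 \<le> a" "a + 1 \<le> n" "\<And>b. 1 \<le> b \<Longrightarrow> b \<le> n \<Longrightarrow> b \<noteq> a \<Longrightarrow> b \<noteq> a + 1 \<Longrightarrow> Kser n a' (F b)"
    "Kser n a' (F (a + 1) * F a)"
  shows "Kser n a' (prod_list (map F (rev [1..<n+1])))"
proof -
  have "prod_list (map F (rev [1..<n+1])) = prod_list (map F (rev [a+2..<n+1])) * (F (a + 1) * F a) * prod_list (map F (rev [1..<a]))"
    unfolding upt_split[OF assms(1,2)] by (simp add: mult.assoc)
  then show ?thesis
    using assms by (auto intro!: Kser_times Kser_prod_list)
qed



lemma Kser_all_other:
  assumes "4 \<le> n" "1 \<le> a" "a + 1 \<le> n" "a \<noteq> n"
    "\<And>b. 1 \<le> b \<Longrightarrow> b \<le> n \<Longrightarrow> b \<noteq> a \<Longrightarrow> b \<noteq> a + 1 \<Longrightarrow> free n a b"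
    "Kser n a ((1 - Mo (zbar n a) 2) * (1 - Mo (zbar n (a + 1)) 2))"
    "Kser n a ((1 - Mo (zz n (a + 1)) 2) * (1 - Mo (zz n a) 2))"
  shows "Kser n a (prod_list (map (\<lambda>b. 1 - Mo (zbar n b) 2) [1..<n+1])
   * Abs_ds (dgeom4 (\<lambda>u. zz n n u * zbar n n (u + 2)))
   * prod_list (map (\<lambda>b. 1 - Mo (zz n b) 2) (rev [1..<n+1])))"
proof (intro Kser_times)
  show "Kser n a (prod_list (map (\<lambda>b. 1 - Mo (zbar n b) 2) [1..<n+1]))"
    by (rule prodF) (use assms in \<open>auto intro: bar_other\<close>)
  show "Kser n a (prod_list (map (\<lambda>b. 1 - Mo (zz n b) 2) (rev [1..<n+1])))"
    by (rule prodH) (use assms in \<open>auto intro: z_other\<close>)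
  show "Kser n a (Abs_ds (dgeom4 (\<lambda>u. zz n n u * zbar n n (u + 2))))"
    using assms by (intro G_other) auto
qed

lemma Kser_n:
  assumes "4 \<le> n"
  shows "Kser n n (prod_list (map (\<lambda>b. 1 - Mo (zbar n b) 2) [1..<n+1])
   * Abs_ds (dgeom4 (\<lambda>u. zz n n u * zbar n n (u + 2)))
   * prod_list (map (\<lambda>b. 1 - Mo (zz n b) 2) (rev [1..<n+1])))"
proof -
  define P where "P = Mo (zbar n (n - 1)) 2"
  define X where "X = Mo (zbar n n) 2"
  define Y where "Y = Mo (zz n n) 2"
  define S where "S = Mo (zz n (n - 1)) 2"
  define G where "G = Abs_ds (dgeom4 (\<lambda>u. zz n n u * zbar n n (u + 2)))"
  define G' where "G' = Abs_ds (dgeom4 (\<lambda>u. zbar n n u * zz n n (u + 2)))"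
  define P1 where "P1 = prod_list (map (\<lambda>b. 1 - Mo (zbar n b) 2) [1..<n-1])"
  define P2 where "P2 = prod_list (map (\<lambda>b. 1 - Mo (zz n b) 2) (rev [1..<n-1]))"
  have up: "[1..<n+1] = [1..<n-1] @ [n-1, n]"
  proof -
    have "[1..<n+1] = [1..<n-1] @ [n-1..<n+1]"
    proof -
      have h2: "n - 1 + 2 = n + 1" using assms by simp
      show ?thesis by (rule upt_add_eq_append[of 1 "n-1" 2, unfolded h2]) (use assms in simp)
    qed
    also have "[n-1..<n+1] = [n-1, n]" using assms by (subst upt_conv_Cons) auto
    finally show ?thesis .
  qed
  have YX: "Y * X = Mo (\<lambda>u. zz n n u * zbar n n (u + 2)) 4"
    unfolding X_def Y_def by (simp add: Mo_times)
  have XY: "X * Y = Mo (\<lambda>u. zbar n n u * zz n n (u + 2)) 4"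
    unfolding X_def Y_def by (simp add: Mo_times)
  have sw: "(1 - X) * G * (1 - Y) = (1 - Y) * G' * (1 - X)"
    by (rule swap_identity) (simp_all only: YX XY G_def G'_def geom_inv)
  have "prod_list (map (\<lambda>b. 1 - Mo (zbar n b) 2) [1..<n+1]) * G * prod_list (map (\<lambda>b. 1 - Mo (zz n b) 2) (rev [1..<n+1]))
      = P1 * (1 - P) * ((1 - X) * G * (1 - Y)) * (1 - S) * P2"
    unfolding up P1_def P2_def P_def X_def Y_def S_def by (simp add: mult.assoc)
  also have "\<dots> = P1 * ((1 - P) * (1 - Y)) * G' * ((1 - X) * (1 - S)) * P2"
    unfolding sw by (simp add: mult.assoc)
  finally have eq: "prod_list (map (\<lambda>b. 1 - Mo (zbar n b) 2) [1..<n+1]) * G * prod_list (map (\<lambda>b. 1 - Mo (zz n b) 2) (rev [1..<n+1]))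
      = P1 * ((1 - P) * (1 - Y)) * G' * ((1 - X) * (1 - S)) * P2" .
  have fr: "free n n b" if "1 \<le> b" "b < n - 1" for b
    using that assms unfolding free_def by auto
  have k1: "Kser n n P1"
    unfolding P1_def
  proof (rule Kser_prod_list)
    fix x assume "x \<in> set (map (\<lambda>b. 1 - Mo (zbar n b) 2) [1..<n-1])"
    then obtain b where b: "1 \<le> b" "b < n - 1" "x = 1 - Mo (zbar n b) 2" by auto
    have "b \<le> n" using b by arith
    then show "Kser n n x" unfolding b(3) using assms b fr by (intro bar_other) auto
  qed
  have k2: "Kser n n P2"
    unfolding P2_def
  proof (rule Kser_prod_list)
    fix x assume "x \<in> set (map (\<lambda>b. 1 - Mo (zz n b) 2) (rev [1..<n-1]))"
    then obtain b where b: "1 \<le> b" "b < n - 1" "x = 1 - Mo (zz n b) 2" by auto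
    have "b \<le> n" using b by arith
    then show "Kser n n x" unfolding b(3) using assms b fr by (intro z_other) auto
  qed
  have k3: "Kser n n ((1 - P) * (1 - Y))"
    unfolding P_def Y_def by (rule caseD_1[OF assms])
  have k4: "Kser n n ((1 - X) * (1 - S))"
    unfolding X_def S_def by (rule caseD_2[OF assms])
  have k5: "Kser n n G'"
    unfolding G'_def by (rule G'_n[OF assms])
  show ?thesis
    unfolding G_def[symmetric] eq by (rule Kser_times[OF Kser_times[OF Kser_times[OF Kser_times[OF k1 k3] k5] k4] k2])
qed

theorem mainTheorem12:
  fixes n a :: nat
  assumes "4 \<le> n" and "1 \<le> a" and "a \<le> n"
  shows "\<forall>j u. S_zero n (screen a (Lser n j u))"
proof -
  let ?P = "prod_list (map (\<lambda>b. 1 - Mo (zbar n b) 2) [1..<n+1])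
   * Abs_ds (dgeom4 (\<lambda>u. zz n n u * zbar n n (u + 2)))
   * prod_list (map (\<lambda>b. 1 - Mo (zz n b) 2) (rev [1..<n+1]))"
  have "Kser n a ?P"
  proof -
    have "a + 3 \<le> n \<or> a = n - 2 \<or> a = n - 1 \<or> a = n" using assms by arith
    then show ?thesis
    proof (elim disjE)
      assume h: "a + 3 \<le> n"
      show ?thesis
        by (rule Kser_all_other) (use assms h caseA_bar caseA_z in \<open>auto simp: free_def\<close>)
    next
      assume h: "a = n - 2"
      have e: "n - 2 + 1 = n - 1" "Suc (n - 2) = n - 1" using assms by simp_all
      show ?thesis unfolding h
        by (rule Kser_all_other) (use assms caseB_bar[OF assms(1)] caseB_z[OF assms(1)] in \<open>auto simp: free_def e\<close>)
    next
      assume h: "a = n - 1"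
      have e: "n - 1 + 1 = n" "Suc (n - 1) = n" using assms by simp_all
      show ?thesis unfolding h
        by (rule Kser_all_other) (use assms caseC_bar[OF assms(1)] caseC_z[OF assms(1)] in \<open>auto simp: free_def e\<close>)
    next
      assume h: "a = n"
      show ?thesis unfolding h by (rule Kser_n[OF assms(1)])
    qed
  qed
  then show ?thesis
    unfolding Lser_prod S_zero_def by (simp add: Kser_def KK_def)
qed

thm_deps mainTheorem12

end
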